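(* The string rewriting system $L$ over the alphabet $\{i,0_2,0_3,\lhd,\rhd\}$ with the seven rules $0_2\rhd\to\rhd$, $0_2 i\rhd\to 0_3 i i\rhd$, $0_2 ii\to i0_2$, $i0_3\to 0_3 iii$, $0_20_3\to 0_30_2$, $\lhd i\to\lhd 0_2$, $\lhd 0_3\to \lhd 0_2 i$ is terminating if and only if for every $n\in\mathbb{N}^+$ the trajectory $n,\tau(n),\tau^2(n),\dots$ contains $1$, where $\tau(n)=n/2$ for even $n$ and $\tau(n)=(3n+1)/2$ for odd $n$ (equivalently, iff the Collatz conjecture holds).
   Context: An SRS induces the rewrite relation $u\ell v\to urv$ for each rule $\ell\to r$; it is terminating if no infinite rewrite sequence exists. (Intended reading: $i(x)=x+1$, $0_2(x)=2x$, $0_3(x)=3x$, $\lhd(x)=1$, $\rhd(x)=x$, a string $\lhd d_1\cdots d_k\rhd$ representing $d_k(\cdots d_1(1))$.) *)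

theory Defs
  imports Main
begin

datatype sym = I | O2 | O3 | Lt | Rt

type_synonym srs = "(sym list \<times> sym list) list"

definition srs_step :: "srs \<Rightarrow> sym list \<Rightarrow> sym list \<Rightarrow> bool" where
  "srs_step R s t \<longleftrightarrow> (\<exists>u v l r. (l, r) \<in> set R \<and> s = u @ l @ v \<and> t = u @ r @ v)"

definition srs_terminating :: "srs \<Rightarrow> bool" where
  "srs_terminating R \<longleftrightarrow> \<not> (\<exists>f :: nat \<Rightarrow> sym list. \<forall>n. srs_step R (f n) (f (Suc n)))"

definition L_sys :: srs where
  "L_sys =
    [ ([O2, Rt], [Rt]),
      ([O2, I, Rt], [O3, I, I, Rt]),
      ([O2, I, I], [I, O2]),
      ([I, O3], [O3, I, I, I]),
      ([O2, O3], [O3, O2]),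
      ([Lt, I], [Lt, O2]),
      ([Lt, O3], [Lt, O2, I]) ]"

definition tau :: "nat \<Rightarrow> nat" where
  "tau n = (if even n then n div 2 else (3 * n + 1) div 2)"

end

theory Submission
  imports Defs
begin

definition cnt :: "nat \<Rightarrow> nat" where
  "cnt n = (LEAST k. (tau ^^ k) n = 1)"

datatype st = St nat nat bool nat nat nat

fun delta :: "sym \<Rightarrow> st \<Rightarrow> st" where
  "delta I (St A B lt v c x) = St A B lt (v+1) c (x+2)"
| "delta O2 (St A B lt v c x) = St A B lt (2*v) (c+1) (x+1)"
| "delta O3 (St A B lt v c x) = St A B lt (3*v) c (4*x)"
| "delta Lt (St A B lt v c x) = St A (B+x) True 1 0 2"
| "delta Rt (St A B lt v c x) = St (A + (if lt then cnt v else c)) (B+x) False 1 0 0"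

definition run :: "sym list \<Rightarrow> st \<Rightarrow> st" where
  "run w s = foldl (\<lambda>s c. delta c s) s w"

lemma run_simps[simp]: "run [] s = s" "run (c#w) s = run w (delta c s)"
  "run (u@w) s = run w (run u s)"
  by (simp_all add: run_def)

fun meas :: "st \<Rightarrow> nat \<times> nat" where
  "meas (St A B lt v c x) = (A, B + x)"

fun vof :: "st \<Rightarrow> nat" where
  "vof (St A B lt v c x) = v"

fun Rel :: "st \<Rightarrow> st \<Rightarrow> bool" where
  "Rel (St A1 B1 lt1 v1 c1 x1) (St A2 B2 lt2 v2 c2 x2) =
    ((A1 = A2 \<and> B1 = B2 \<and> lt1 = lt2 \<and> x1 > x2 \<and> (lt1 \<longrightarrow> v1 = v2) \<and> (\<not> lt1 \<longrightarrow> c1 = c2))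
     \<or> ((A1 > A2 \<or> (A1 = A2 \<and> B1 > B2)) \<and> lt1 = lt2 \<and> v1 = v2 \<and> c1 = c2 \<and> x1 = x2))"

lemma Rel_delta: "Rel s1 s2 \<Longrightarrow> Rel (delta c s1) (delta c s2)"
  by (cases s1; cases s2; cases c; auto)

lemma Rel_run: "Rel s1 s2 \<Longrightarrow> Rel (run w s1) (run w s2)"
  by (induction w arbitrary: s1 s2) (auto intro: Rel_delta)

lemma Rel_meas: "Rel s1 s2 \<Longrightarrow> (meas s2, meas s1) \<in> less_than <*lex*> less_than"
  by (cases s1; cases s2; auto)

lemma vof_delta: "vof s > 0 \<Longrightarrow> vof (delta c s) > 0"
  by (cases s; cases c; auto)

lemma vof_run: "vof s > 0 \<Longrightarrow> vof (run w s) > 0"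
  by (induction w arbitrary: s) (simp_all add: vof_delta)

lemma cnt_dec:
  assumes H: "\<forall>n::nat. n > 0 \<longrightarrow> (\<exists>k. (tau ^^ k) n = 1)"
    and n: "n > 0" "n \<noteq> 1"
  shows "cnt (tau n) < cnt n"
proof -
  obtain k where k: "(tau ^^ k) n = 1" using H n by blast
  have c: "(tau ^^ cnt n) n = 1" unfolding cnt_def by (rule LeastI, rule k)
  have "cnt n \<noteq> 0"
  proof
    assume "cnt n = 0" then show False using c n by simp
  qed
  then obtain m where m: "cnt n = Suc m" by (cases "cnt n") auto
  have "(tau ^^ m) (tau n) = 1" using c m by (simp add: funpow_Suc_right del: funpow.simps)
  then have "cnt (tau n) \<le> m" unfolding cnt_def by (rule Least_le)
  then show ?thesis using m by simp
qed

lemma tau_even: "tau (2*v) = v" by (simp add: tau_def)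
lemma tau_odd: "tau (2*v+1) = 3*v+2" by (simp add: tau_def)

lemma rules_Rel:
  assumes H: "\<forall>n::nat. n > 0 \<longrightarrow> (\<exists>k. (tau ^^ k) n = 1)"
    and v: "vof s > 0" and lr: "(l, r) \<in> set L_sys"
  shows "Rel (run l s) (run r s)"
proof -
  obtain A B lt v c x where s: "s = St A B lt v c x" by (cases s)
  have v0: "v > 0" using v s by simp
  have c1: "cnt v < cnt (2*v)" using cnt_dec[OF H, of "2*v"] v0 by (simp add: tau_even)
  have c2': "cnt (tau (2*v+1)) < cnt (2*v+1)" by (rule cnt_dec[OF H]) (use v0 in auto)
  have c2: "cnt (3*v+2) < cnt (2*v+1)" using c2' by (simp only: tau_odd)
  show ?thesis using lr c1 c2 unfolding L_sys_def s
    by (auto simp: algebra_simps)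
qed

lemma term_dir:
  assumes H: "\<forall>n::nat. n > 0 \<longrightarrow> (\<exists>k. (tau ^^ k) n = 1)"
  shows "srs_terminating L_sys"
  unfolding srs_terminating_def
proof
  assume "\<exists>f. \<forall>n. srs_step L_sys (f n) (f (Suc n))"
  then obtain f where f: "\<And>n. srs_step L_sys (f n) (f (Suc n))" by blast
  define g where "g n = meas (run (f n) (St 0 0 False 1 0 0))" for n
  have "(g (Suc n), g n) \<in> less_than <*lex*> less_than" for n
  proof -
    obtain u w l r where lr: "(l, r) \<in> set L_sys" and e: "f n = u @ l @ w" "f (Suc n) = u @ r @ w"
      using f[of n] unfolding srs_step_def by blast
    let ?s = "run u (St 0 0 False 1 0 0)"
    have "vof ?s > 0" by (rule vof_run) simp
    then have "Rel (run l ?s) (run r ?s)" by (rule rules_Rel[OF H _ lr])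
    then have "Rel (run w (run l ?s)) (run w (run r ?s))" by (rule Rel_run)
    then show ?thesis unfolding g_def e by (simp add: Rel_meas)
  qed
  then show False using wf_iff_no_infinite_down_chain[of "less_than <*lex*> less_than"] by blast
qed

fun ev :: "sym list \<Rightarrow> nat \<Rightarrow> nat" where
  "ev [] x = x"
| "ev (I#w) x = ev w (x+1)"
| "ev (O2#w) x = ev w (2*x)"
| "ev (O3#w) x = ev w (3*x)"
| "ev (Lt#w) x = ev w x"
| "ev (Rt#w) x = ev w x"

lemma ev_append[simp]: "ev (u@w) x = ev w (ev u x)"
proof (induction u arbitrary: x)
  case (Cons c u) then show ?case by (cases c) auto
qed simp

lemma ev_rep: "ev (replicate m I) x = x + m"
  by (induction m arbitrary: x) auto

lemma stepI: "(l, r) \<in> set L_sys \<Longrightarrow> s = u @ l @ v \<Longrightarrow> \<exists>t. srs_step L_sys s t"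
  unfolding srs_step_def by blast

lemma step_prefix: "srs_step R s t \<Longrightarrow> srs_step R (p@s) (p@t)"
  unfolding srs_step_def by (metis append.assoc)

lemma progB: "Lt \<notin> set w \<Longrightarrow> Rt \<notin> set w \<Longrightarrow> \<exists>t. srs_step L_sys (O2#w@[Rt]) t"
proof (induction w rule: length_induct)
  case (1 w)
  show ?case
  proof (cases w)
    case Nil
    then show ?thesis by (intro stepI[where l="[O2,Rt]" and r="[Rt]" and u="[]" and v="[]"]) (auto simp: L_sys_def)
  next
    case (Cons x w')
    show ?thesis
    proof (cases x)
      case I
      show ?thesis
      proof (cases w')
        case Nil
        then show ?thesis using Cons I
          by (intro stepI[where l="[O2,I,Rt]" and r="[O3,I,I,Rt]" and u="[]" and v="[]"]) (auto simp: L_sys_def)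
      next
        case (Cons y w'')
        note C2 = Cons
        show ?thesis
        proof (cases y)
          case I
          then show ?thesis using Cons C2 \<open>x = I\<close> \<open>w = x # w'\<close>
            by (intro stepI[where l="[O2,I,I]" and r="[I,O2]" and u="[]" and v="w''@[Rt]"]) (auto simp: L_sys_def)
        next
          case O2
          have "\<exists>t. srs_step L_sys (O2#w''@[Rt]) t"
            using "1.IH" "1.prems" \<open>w = x # w'\<close> C2 by auto
          then obtain t where "srs_step L_sys (O2#w''@[Rt]) t" by blast
          then have "srs_step L_sys ([O2,I] @ (O2#w''@[Rt])) ([O2,I]@t)" by (rule step_prefix)
          then show ?thesis using O2 C2 \<open>x = I\<close> \<open>w = x # w'\<close> by auto
        next
          case O3
          then show ?thesis using Cons C2 \<open>x = I\<close> \<open>w = x # w'\<close>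
            by (intro stepI[where l="[I,O3]" and r="[O3,I,I,I]" and u="[O2]" and v="w''@[Rt]"]) (auto simp: L_sys_def)
        next
          case Lt then show ?thesis using "1.prems" C2 \<open>w = x # w'\<close> by auto
        next
          case Rt then show ?thesis using "1.prems" C2 \<open>w = x # w'\<close> by auto
        qed
      qed
    next
      case O2
      have "\<exists>t. srs_step L_sys (O2#w'@[Rt]) t"
        using "1.IH" "1.prems" Cons by auto
      then obtain t where "srs_step L_sys (O2#w'@[Rt]) t" by blast
      then have "srs_step L_sys ([O2] @ (O2#w'@[Rt])) ([O2]@t)" by (rule step_prefix)
      then show ?thesis using O2 Cons by auto
    next
      case O3
      then show ?thesis using Cons
        by (intro stepI[where l="[O2,O3]" and r="[O3,O2]" and u="[]" and v="w'@[Rt]"]) (auto simp: L_sys_def)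
    next
      case Lt then show ?thesis using "1.prems" Cons by auto
    next
      case Rt then show ?thesis using "1.prems" Cons by auto
    qed
  qed
qed

lemma progA: "Lt \<notin> set u \<Longrightarrow> Rt \<notin> set u \<Longrightarrow> u \<noteq> [] \<Longrightarrow> \<exists>t. srs_step L_sys (Lt#u@[Rt]) t"
proof (cases u)
  case (Cons x w)
  assume a: "Lt \<notin> set u" "Rt \<notin> set u"
  show ?thesis
  proof (cases x)
    case I then show ?thesis using Cons
      by (intro stepI[where l="[Lt,I]" and r="[Lt,O2]" and u="[]" and v="w@[Rt]"]) (auto simp: L_sys_def)
  next
    case O3 then show ?thesis using Cons
      by (intro stepI[where l="[Lt,O3]" and r="[Lt,O2,I]" and u="[]" and v="w@[Rt]"]) (auto simp: L_sys_def)
  next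
    case O2
    obtain t where "srs_step L_sys (O2#w@[Rt]) t" using progB[of w] a Cons by auto
    then have "srs_step L_sys ([Lt] @ (O2#w@[Rt])) ([Lt]@t)" by (rule step_prefix)
    then show ?thesis using O2 Cons by auto
  qed (use a Cons in auto)
qed simp

lemma split_mid:
  assumes "Lt # u @ [Rt] = a @ l @ b" "Lt \<notin> set l" "Rt \<notin> set l" "l \<noteq> []"
  shows "\<exists>a' b'. a = Lt # a' \<and> b = b' @ [Rt] \<and> u = a' @ l @ b'"
proof -
  obtain a' where a: "a = Lt # a'" using assms
    by (cases a) (auto simp: neq_Nil_conv)
  then have e: "u @ [Rt] = a' @ l @ b" using assms by simp
  have "b \<noteq> []"
  proof
    assume "b = []"
    then have "Rt \<in> set l" using e assms(4) by (metis append_Nil2 last_appendR last_in_set last_snoc)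
    then show False using assms by simp
  qed
  then obtain b' y where b: "b = b' @ [y]" by (cases b rule: rev_cases) auto
  then show ?thesis using e a by auto
qed

lemma split_left:
  assumes "Lt # u @ [Rt] = a @ Lt # l @ b" "Lt \<notin> set u" "Rt \<notin> set l" "l \<noteq> []"
  shows "\<exists>b'. a = [] \<and> b = b' @ [Rt] \<and> u = l @ b'"
proof -
  have a: "a = []"
  proof (rule ccontr)
    assume "a \<noteq> []"
    then obtain z a' where "a = z # a'" by (cases a) auto
    then have "u @ [Rt] = a' @ Lt # l @ b" using assms by simp
    then have "Lt \<in> set (u @ [Rt])" by simp
    then show False using assms by simp
  qed
  then have e: "u @ [Rt] = l @ b" using assms by simp
  have "b \<noteq> []"
  proof
    assume "b = []"
    then have "Rt \<in> set l" using e assms(4) by (metis append_Nil2 last_in_set last_snoc)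
    then show False using assms by simp
  qed
  then obtain b' y where b: "b = b' @ [y]" by (cases b rule: rev_cases) auto
  then show ?thesis using e a by auto
qed

lemma split_right:
  assumes "Lt # u @ [Rt] = a @ l @ Rt # b" "Rt \<notin> set u" "Lt \<notin> set l" "l \<noteq> []"
  shows "\<exists>a'. b = [] \<and> a = Lt # a' \<and> u = a' @ l"
proof -
  have b: "b = []"
  proof (rule ccontr)
    assume "b \<noteq> []"
    then obtain b' z where "b = b' @ [z]" by (cases b rule: rev_cases) auto
    then have "Lt # u = a @ l @ Rt # b'" using assms by simp
    then have "Rt \<in> set (Lt # u)" by (metis in_set_conv_decomp append.assoc)
    then show False using assms by simp
  qed
  then have e: "Lt # u = a @ l" using assms by simp
  obtain a' where a: "a = Lt # a'" using e assms
    by (cases a) (auto simp: neq_Nil_conv)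
  then show ?thesis using e b by auto
qed

lemma pres:
  assumes u: "Lt \<notin> set u" "Rt \<notin> set u" and st: "srs_step L_sys (Lt#u@[Rt]) t"
  shows "\<exists>u'. t = Lt#u'@[Rt] \<and> Lt \<notin> set u' \<and> Rt \<notin> set u' \<and>
     (ev u' 1 = ev u 1 \<or> ev u' 1 = tau (ev u 1))"
proof -
  obtain a b l r where lr: "(l, r) \<in> set L_sys" and e: "Lt#u@[Rt] = a @ l @ b" and t: "t = a @ r @ b"
    using st unfolding srs_step_def by blast
  from lr have "(l = [O2,Rt] \<and> r = [Rt]) \<or> (l = [O2,I,Rt] \<and> r = [O3,I,I,Rt]) \<or>
     (l = [O2,I,I] \<and> r = [I,O2]) \<or> (l = [I,O3] \<and> r = [O3,I,I,I]) \<or> (l = [O2,O3] \<and> r = [O3,O2]) \<or>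
     (l = [Lt,I] \<and> r = [Lt,O2]) \<or> (l = [Lt,O3] \<and> r = [Lt,O2,I])"
    by (simp add: L_sys_def)
  then show ?thesis
  proof (elim disjE conjE)
    assume l: "l = [O2,Rt]" and r: "r = [Rt]"
    have "Lt # u @ [Rt] = a @ [O2] @ Rt # b" using e l by simp
    from split_right[OF this u(2)] obtain a' where "b = []" "a = Lt # a'" "u = a' @ [O2]" by auto
    then show ?thesis using t r u by (auto simp: tau_even)
  next
    assume l: "l = [O2,I,Rt]" and r: "r = [O3,I,I,Rt]"
    have "Lt # u @ [Rt] = a @ [O2,I] @ Rt # b" using e l by simp
    from split_right[OF this u(2)] obtain a' where "b = []" "a = Lt # a'" "u = a' @ [O2,I]" by auto
    moreover have "tau (2 * ev a' 1 + 1) = 3 * ev a' 1 + 2" by (rule tau_odd)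
    ultimately show ?thesis using t r u by auto
  next
    assume l: "l = [O2,I,I]" and r: "r = [I,O2]"
    from split_mid[OF e] l obtain a' b' where "a = Lt # a'" "b = b' @ [Rt]" "u = a' @ l @ b'" by auto
    then show ?thesis using t r u l by auto
  next
    assume l: "l = [I,O3]" and r: "r = [O3,I,I,I]"
    from split_mid[OF e] l obtain a' b' where "a = Lt # a'" "b = b' @ [Rt]" "u = a' @ l @ b'" by auto
    then show ?thesis using t r u l by (auto simp: numeral_3_eq_3)
  next
    assume l: "l = [O2,O3]" and r: "r = [O3,O2]"
    from split_mid[OF e] l obtain a' b' where "a = Lt # a'" "b = b' @ [Rt]" "u = a' @ l @ b'" by auto
    then show ?thesis using t r u l by (auto simp: algebra_simps)
  next
    assume l: "l = [Lt,I]" and r: "r = [Lt,O2]"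
    have "Lt # u @ [Rt] = a @ Lt # [I] @ b" using e l by simp
    from split_left[OF this u(1)] obtain b' where "a = []" "b = b' @ [Rt]" "u = [I] @ b'" by auto
    then show ?thesis using t r u by (auto simp: numeral_2_eq_2)
  next
    assume l: "l = [Lt,O3]" and r: "r = [Lt,O2,I]"
    have "Lt # u @ [Rt] = a @ Lt # [O3] @ b" using e l by simp
    from split_left[OF this u(1)] obtain b' where "a = []" "b = b' @ [Rt]" "u = [O3] @ b'" by auto
    then show ?thesis using t r u by auto
  qed
qed

definition good :: "sym list \<Rightarrow> bool" where
  "good u \<longleftrightarrow> Lt \<notin> set u \<and> Rt \<notin> set u \<and> (\<forall>k. (tau ^^ k) (ev u 1) \<noteq> 1)"

lemma good_next: "good u \<Longrightarrow> \<exists>u'. srs_step L_sys (Lt#u@[Rt]) (Lt#u'@[Rt]) \<and> good u'"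
proof -
  assume g: "good u"
  then have u: "Lt \<notin> set u" "Rt \<notin> set u" and nk: "\<And>k. (tau ^^ k) (ev u 1) \<noteq> 1"
    unfolding good_def by auto
  have "u \<noteq> []" using nk[of 0] by auto
  then obtain t where st: "srs_step L_sys (Lt#u@[Rt]) t" using progA u by blast
  from pres[OF u st] obtain u' where t: "t = Lt#u'@[Rt]" "Lt \<notin> set u'" "Rt \<notin> set u'"
    and ev: "ev u' 1 = ev u 1 \<or> ev u' 1 = tau (ev u 1)" by blast
  have "(tau ^^ k) (ev u' 1) \<noteq> 1" for k
    using ev nk[of k] nk[of "Suc k"] by (auto simp: funpow_Suc_right simp del: funpow.simps)
  then show ?thesis using st t unfolding good_def by blast
qed

lemma nonterm_dir:
  assumes n: "n > 0" and nk: "\<forall>k. (tau ^^ k) n \<noteq> 1"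
  shows "\<not> srs_terminating L_sys"
proof -
  define F where "F = rec_nat (replicate (n-1) I) (\<lambda>_ u. SOME u'. srs_step L_sys (Lt#u@[Rt]) (Lt#u'@[Rt]) \<and> good u')"
  have F0: "F 0 = replicate (n-1) I" and FS: "\<And>k. F (Suc k) = (SOME u'. srs_step L_sys (Lt#F k@[Rt]) (Lt#u'@[Rt]) \<and> good u')"
    unfolding F_def by simp_all
  have H: "srs_step L_sys (Lt#u@[Rt]) (Lt#(SOME u'. srs_step L_sys (Lt#u@[Rt]) (Lt#u'@[Rt]) \<and> good u')@[Rt])
     \<and> good (SOME u'. srs_step L_sys (Lt#u@[Rt]) (Lt#u'@[Rt]) \<and> good u')" if "good u" for u
    using someI_ex[OF good_next[OF that]] by simp
  have g: "good (F k)" for k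
  proof (induction k)
    case 0
    show ?case unfolding F0 good_def using n nk by (simp add: ev_rep)
  next
    case (Suc k)
    then show ?case unfolding FS using H by blast
  qed
  have G: "srs_step L_sys (Lt#F k@[Rt]) (Lt#F (Suc k)@[Rt])" for k
    unfolding FS using H[OF g[of k]] by blast
  then show ?thesis unfolding srs_terminating_def
    by (intro notI) (erule notE, rule exI[of _ "\<lambda>k. Lt#F k@[Rt]"], simp)
qed

theorem mainTheorem8:
  shows "srs_terminating L_sys \<longleftrightarrow> (\<forall>n::nat. n > 0 \<longrightarrow> (\<exists>k. (tau ^^ k) n = 1))"
  using term_dir nonterm_dir by blast

end
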